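(* Assume $\sigma_1\equiv0$ and consider excess-of-loss reinsurance, with retention level $u\in[0,\infty]$, $m(t,y,u)=\theta\int_0^u\bar F(z)\,dz-(\theta-\eta)\mathbb E[Z]$ and $\sigma(t,y,u)=\sqrt{\int_0^u2z\bar F(z)\,dz}$. Then the optimal retention level is $$u^*(x)=\frac{\theta}{A(x)}.$$
   Context: $Z$ is a claim size with distribution function $F$ on $[0,\infty)$, $\bar F=1-F$, $\mathbb E[Z]<\infty$ and $F(z)<1$ for all $z\in[0,\infty)$; $\theta,\eta>0$ are the reinsurer's and the insurer's safety loadings. With retention $u_t$ and amount $a_t$ invested in a risky asset with drift $\mu(t,y)>0$ and volatility $\sigma_2(t,y)>0$ (driven by a Brownian motion $W^2$ independent of $W^1$; $\sigma_1\equiv0$), the surplus is $dX_t=\{m(t,Y_t,u_t)+a_t\mu(t,Y_t)\}dt+\sigma(t,Y_t,u_t)dW^1_t+a_t\sigma_2(t,Y_t)dW^2_t$, where $Y$ is an environmental diffusion, and the insurer maximises $\mathbb E[U(X_T)]$. The optimal retention is the maximiser in the HJB equation under the ansatz $V(t,x,y)=U(x)\tilde V(t,y)$ for the value function, i.e. the maximiser over $u\in[0,\infty]$ of $\theta\int_0^u\bar F(z)dz-\frac{A(x)}{2}\int_0^u2z\bar F(z)dz$. $U$ is a SAHARA utility: $A(x):=-U''(x)/U'(x)=\alpha/\sqrt{b^2+(x-d)^2}$, $\alpha>0$, $b>0$, $d\in\mathbb R$. *)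

theory Defs
  imports "HOL-Probability.Probability"
begin

definition claim_cdf :: "'s measure \<Rightarrow> ('s \<Rightarrow> real) \<Rightarrow> real \<Rightarrow> real" where
  "claim_cdf M Z z = measure M {\<omega> \<in> space M. Z \<omega> \<le> z}"

definition sahara_A :: "real \<Rightarrow> real \<Rightarrow> real \<Rightarrow> real \<Rightarrow> real" where
  "sahara_A \<alpha> b d x = \<alpha> / sqrt (b\<^sup>2 + (x - d)\<^sup>2)"

text \<open>Objective of the HJB maximisation for retention u in [0,\<infinity>] (encoded as extended real):
  theta * int_0^u Fbar(z) dz - A/2 * int_0^u 2 z Fbar(z) dz.
  Integrands are nonnegative, so nonnegative (Lebesgue) integrals are used; the second one
  may be +\<infinity> when u = \<infinity>, giving the value -\<infinity>.\<close>
definition retention_obj :: "(real \<Rightarrow> real) \<Rightarrow> real \<Rightarrow> real \<Rightarrow> ereal \<Rightarrow> ereal" where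
  "retention_obj F \<theta> A u =
     ereal \<theta> * enn2ereal (\<integral>\<^sup>+ z. ennreal (1 - F z) * indicator {z. 0 \<le> z \<and> ereal z \<le> u} z \<partial>lborel)
     - ereal (A / 2) * enn2ereal (\<integral>\<^sup>+ z. ennreal (2 * z * (1 - F z)) * indicator {z. 0 \<le> z \<and> ereal z \<le> u} z \<partial>lborel)"

end

theory Submission
  imports Defs
begin

lemma tail_finite:
  assumes P: "prob_space M" and Zm[measurable]: "Z \<in> borel_measurable M" and Zi: "integrable M Z"
  shows "(\<integral>\<^sup>+z. ennreal (1 - claim_cdf M Z z) * indicator {z. 0 \<le> z} z \<partial>lborel) < \<infinity>"
proof -
  interpret prob_space M by (rule P)
  interpret pair_sigma_finite lborel M
    by (simp add: pair_sigma_finite_def lborel.sigma_finite_measure_axioms sigma_finite_measure_axioms)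
  have meas: "(\<lambda>(z, \<omega>). indicator {p. 0 \<le> fst p \<and> fst p < Z (snd p)} (z, \<omega>) :: ennreal) \<in> borel_measurable (lborel \<Otimes>\<^sub>M M)"
    by measurable
  have eq: "ennreal (1 - claim_cdf M Z z) * indicator {z. 0 \<le> z} z
      = (\<integral>\<^sup>+\<omega>. indicator {p. 0 \<le> fst p \<and> fst p < Z (snd p)} (z, \<omega>) \<partial>M)" for z
  proof (cases "0 \<le> z")
    case True
    have "(\<integral>\<^sup>+\<omega>. indicator {p. 0 \<le> fst p \<and> fst p < Z (snd p)} (z, \<omega>) \<partial>M)
        = (\<integral>\<^sup>+\<omega>. indicator {\<omega> \<in> space M. z < Z \<omega>} \<omega> \<partial>M)"
      using True by (intro nn_integral_cong) (auto simp: indicator_def)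
    also have "\<dots> = emeasure M {\<omega> \<in> space M. z < Z \<omega>}" by simp
    also have "\<dots> = ennreal (prob {\<omega> \<in> space M. z < Z \<omega>})" by (simp add: emeasure_eq_measure)
    also have "{\<omega> \<in> space M. z < Z \<omega>} = space M - {\<omega> \<in> space M. Z \<omega> \<le> z}" by auto
    also have "prob \<dots> = 1 - prob {\<omega> \<in> space M. Z \<omega> \<le> z}" by (rule prob_compl) measurable
    finally show ?thesis using True by (simp add: claim_cdf_def)
  next
    case False
    then show ?thesis by (simp add: indicator_def)
  qed
  have "(\<integral>\<^sup>+z. ennreal (1 - claim_cdf M Z z) * indicator {z. 0 \<le> z} z \<partial>lborel)
      = (\<integral>\<^sup>+z. (\<integral>\<^sup>+\<omega>. indicator {p. 0 \<le> fst p \<and> fst p < Z (snd p)} (z, \<omega>) \<partial>M) \<partial>lborel)"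
    by (simp add: eq)
  also have "\<dots> = (\<integral>\<^sup>+\<omega>. (\<integral>\<^sup>+z. indicator {p. 0 \<le> fst p \<and> fst p < Z (snd p)} (z, \<omega>) \<partial>lborel) \<partial>M)"
    using Fubini'[OF meas] by simp
  also have "\<dots> \<le> (\<integral>\<^sup>+\<omega>. ennreal (norm (Z \<omega>)) \<partial>M)"
  proof (rule nn_integral_mono)
    fix \<omega>
    have "(\<integral>\<^sup>+z. indicator {p. 0 \<le> fst p \<and> fst p < Z (snd p)} (z, \<omega>) \<partial>lborel)
        \<le> (\<integral>\<^sup>+z. indicator {0..\<bar>Z \<omega>\<bar>} z \<partial>lborel)"
      by (intro nn_integral_mono) (auto simp: indicator_def)
    also have "\<dots> = ennreal (norm (Z \<omega>))" by simp
    finally show "(\<integral>\<^sup>+z. indicator {p. 0 \<le> fst p \<and> fst p < Z (snd p)} (z, \<omega>) \<partial>lborel) \<le> ennreal (norm (Z \<omega>))" .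
  qed
  also have "\<dots> < \<infinity>" using Zi unfolding integrable_iff_bounded by blast
  finally show ?thesis .
qed


lemma nn_to_int:
  fixes g :: "real \<Rightarrow> real"
  assumes g[measurable]: "g \<in> borel_measurable lborel" and S[measurable]: "S \<in> sets lborel"
    and nn: "\<And>z. 0 \<le> g z" and fin: "(\<integral>\<^sup>+z. ennreal (g z) * indicator S z \<partial>lborel) < \<infinity>"
  shows "integrable lborel (\<lambda>z. g z * indicator S z)"
    and "enn2ereal (\<integral>\<^sup>+z. ennreal (g z) * indicator S z \<partial>lborel) = ereal (\<integral>z. g z * indicator S z \<partial>lborel)"
proof -
  have eqf: "ennreal (g z) * indicator S z = ennreal (g z * indicator S z)" for z
    by (simp add: indicator_def)
  show I: "integrable lborel (\<lambda>z. g z * indicator S z)"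
    using fin nn by (intro integrableI_nonneg) (auto simp: eqf)
  have "(\<integral>\<^sup>+z. ennreal (g z) * indicator S z \<partial>lborel) = ennreal (\<integral>z. g z * indicator S z \<partial>lborel)"
    unfolding eqf using nn by (intro nn_integral_eq_integral[OF I]) auto
  moreover have "0 \<le> (\<integral>z. g z * indicator S z \<partial>lborel)"
    using nn by (intro integral_nonneg_AE AE_I2) auto
  ultimately show "enn2ereal (\<integral>\<^sup>+z. ennreal (g z) * indicator S z \<partial>lborel) = ereal (\<integral>z. g z * indicator S z \<partial>lborel)"
    by simp
qed

lemma pos_interval_integral:
  fixes h :: "real \<Rightarrow> real"
  assumes I: "integrable lborel h" and nn: "\<And>z. 0 \<le> h z" and pq: "p < q"
    and pos: "\<And>z. p < z \<Longrightarrow> z < q \<Longrightarrow> 0 < h z"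
  shows "0 < (\<integral>z. h z \<partial>lborel)"
proof -
  have hm[measurable]: "h \<in> borel_measurable lborel" using I by auto
  have ge: "0 \<le> (\<integral>z. h z \<partial>lborel)" using nn by (intro integral_nonneg_AE AE_I2) auto
  have "(\<integral>z. h z \<partial>lborel) \<noteq> 0"
  proof
    assume "(\<integral>z. h z \<partial>lborel) = 0"
    then have "AE z in lborel. h z = 0" using integral_nonneg_eq_0_iff_AE[OF I] nn by auto
    then have "emeasure lborel {z. h z \<noteq> 0} = 0"
      by (subst (asm) AE_iff_measurable[of "{z. h z \<noteq> 0}"]) auto
    moreover have "emeasure lborel {p<..<q} \<le> emeasure lborel {z. h z \<noteq> 0}"
      using pos by (intro emeasure_mono) (auto simp: less_imp_neq[symmetric] dest: pos)
    ultimately show False using pq by simp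
  qed
  then show ?thesis using ge by simp
qed


theorem corollary5p8:
  fixes M :: "'s measure" and Z :: "'s \<Rightarrow> real"
    and \<theta> \<eta> \<alpha> b d :: real
  assumes "prob_space M"
    and "Z \<in> borel_measurable M"
    and "AE \<omega> in M. 0 \<le> Z \<omega>"
    and "integrable M Z"
    and "\<forall>z\<ge>0. claim_cdf M Z z < 1"
    and "\<theta> > 0" and "\<eta> > 0"
    and "\<alpha> > 0" and "b > 0"
  shows "\<forall>x. \<forall>u::ereal. 0 \<le> u \<and> u \<noteq> ereal (\<theta> / sahara_A \<alpha> b d x) \<longrightarrow>
           retention_obj (claim_cdf M Z) \<theta> (sahara_A \<alpha> b d x) u
             < retention_obj (claim_cdf M Z) \<theta> (sahara_A \<alpha> b d x) (ereal (\<theta> / sahara_A \<alpha> b d x))"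
proof (intro allI impI, elim conjE)
  fix x and u :: ereal
  assume u0: "0 \<le> u" and uc: "u \<noteq> ereal (\<theta> / sahara_A \<alpha> b d x)"
  interpret prob_space M by (rule assms(1))
  note Zm[measurable] = assms(2)
  define A where "A = sahara_A \<alpha> b d x"
  define c where "c = \<theta> / A"
  define F where "F = claim_cdf M Z"
  define G where "G = (\<lambda>z. 1 - F z)"
  define S where "S = (\<lambda>v::ereal. {z::real. 0 \<le> z \<and> ereal z \<le> v})"
  have A0: "0 < A" unfolding A_def sahara_A_def using assms(8,9)
    by (intro divide_pos_pos real_sqrt_gt_zero) (auto intro: add_pos_nonneg)
  have c0: "0 < c" unfolding c_def using A0 assms(6) by simp
  have Ac: "A * c = \<theta>" unfolding c_def using A0 by simp
  have le_c: "z \<le> c \<Longrightarrow> A * z \<le> \<theta>" for z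
    using mult_left_mono[of z c A] A0 Ac by simp
  have gt_c: "c < z \<Longrightarrow> \<theta> < A * z" for z
    using mult_strict_left_mono[of c z A] A0 Ac by simp
  have lt_c: "z < c \<Longrightarrow> A * z < \<theta>" for z
    using mult_strict_left_mono[of z c A] A0 Ac by simp
  have Fmono: "mono F" unfolding F_def claim_cdf_def
    by (intro monoI finite_measure_mono) auto
  have Fm[measurable]: "F \<in> borel_measurable borel" by (rule borel_measurable_mono[OF Fmono])
  have Gm[measurable]: "G \<in> borel_measurable borel" unfolding G_def by measurable
  have G01: "0 \<le> G z" "G z \<le> 1" for z unfolding G_def F_def claim_cdf_def by auto
  have Gpos: "0 \<le> z \<Longrightarrow> 0 < G z" for z unfolding G_def F_def using assms(5) by auto
  have Sm[measurable]: "S v \<in> sets lborel" for v unfolding S_def by measurable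
  have S_ereal: "S (ereal r) = {0..r}" for r unfolding S_def by auto
  have S_inf: "S \<infinity> = {0..}" unfolding S_def by auto
  have tail: "(\<integral>\<^sup>+z. ennreal (G z) * indicator {z. 0 \<le> z} z \<partial>lborel) < \<infinity>"
    unfolding G_def F_def by (rule tail_finite[OF assms(1,2,4)])
  have I1fin: "(\<integral>\<^sup>+z. ennreal (G z) * indicator (S v) z \<partial>lborel) < \<infinity>" for v
  proof -
    have "(\<integral>\<^sup>+z. ennreal (G z) * indicator (S v) z \<partial>lborel) \<le> (\<integral>\<^sup>+z. ennreal (G z) * indicator {z. 0 \<le> z} z \<partial>lborel)"
      by (intro nn_integral_mono) (auto simp: S_def indicator_def)
    then show ?thesis using tail by (simp add: order_le_less_trans)
  qed
  have I2fin: "(\<integral>\<^sup>+z. ennreal (2 * z * G z) * indicator (S (ereal r)) z \<partial>lborel) < \<infinity>" for r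
  proof -
    have "(\<integral>\<^sup>+z. ennreal (2 * z * G z) * indicator (S (ereal r)) z \<partial>lborel)
        \<le> (\<integral>\<^sup>+z. ennreal (2 * \<bar>r\<bar>) * indicator {0..r} z \<partial>lborel)"
    proof (intro nn_integral_mono)
      fix z
      show "ennreal (2 * z * G z) * indicator (S (ereal r)) z \<le> ennreal (2 * \<bar>r\<bar>) * indicator {0..r} z"
      proof (cases "z \<in> {0..r}")
        case True
        then have "2 * z * G z \<le> 2 * \<bar>r\<bar>" using G01[of z] mult_left_le[of "G z" z] by auto
        then show ?thesis using True by (simp add: S_ereal ennreal_leI)
      qed (simp add: S_ereal)
    qed
    also have "\<dots> = ennreal (2 * \<bar>r\<bar>) * emeasure lborel {0..r}" by (rule nn_integral_cmult_indicator) simp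
    also have "\<dots> < \<infinity>" by (cases "0 \<le> r") (simp_all add: ennreal_mult_less_top)
    finally show ?thesis .
  qed
  define g1 where "g1 = (\<lambda>v z. G z * indicator (S v) z)"
  define g2 where "g2 = (\<lambda>v z. 2 * z * G z * indicator (S v) z)"
  define \<Phi> where "\<Phi> = (\<lambda>v. \<theta> * (\<integral>z. g1 v z \<partial>lborel) - A / 2 * (\<integral>z. g2 v z \<partial>lborel))"
  have g2nn: "0 \<le> 2 * z * G z * indicator (S v) z" for z v
    using G01[of z] by (auto simp: S_def indicator_def)
  have obj_eq: "retention_obj F \<theta> A v = ereal (\<Phi> v)"
    and ints: "integrable lborel (g1 v)" "integrable lborel (g2 v)"
    if "(\<integral>\<^sup>+z. ennreal (2 * z * G z) * indicator (S v) z \<partial>lborel) < \<infinity>" for v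
  proof -
    have e2: "ennreal (2 * z * G z) * indicator (S v) z = ennreal (2 * z * G z * indicator (S v) z) * indicator (S v) z" for z
      by (simp add: indicator_def)
    have f2: "(\<integral>\<^sup>+z. ennreal (2 * z * G z * indicator (S v) z) * indicator (S v) z \<partial>lborel) < \<infinity>"
      using that by (simp only: e2)
    have Gml[measurable]: "G \<in> borel_measurable lborel" using Gm by simp
    have g2m: "(\<lambda>z. 2 * z * G z * indicator (S v) z) \<in> borel_measurable lborel" by measurable
    note A1 = nn_to_int[of G "S v", OF Gml Sm G01(1) I1fin]
    note A2 = nn_to_int[of "\<lambda>z. 2 * z * G z * indicator (S v) z" "S v", OF g2m Sm g2nn f2]
    have r1: "(\<integral>\<^sup>+z. ennreal (1 - F z) * indicator {z. 0 \<le> z \<and> ereal z \<le> v} z \<partial>lborel) = (\<integral>\<^sup>+z. ennreal (G z) * indicator (S v) z \<partial>lborel)"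
      by (simp add: G_def S_def)
    have r2: "(\<integral>\<^sup>+z. ennreal (2 * z * (1 - F z)) * indicator {z. 0 \<le> z \<and> ereal z \<le> v} z \<partial>lborel) = (\<integral>\<^sup>+z. ennreal (2 * z * G z * indicator (S v) z) * indicator (S v) z \<partial>lborel)"
      by (simp add: G_def S_def e2[unfolded G_def S_def])
    have h2: "(\<lambda>z. 2 * z * G z * indicator (S v) z * indicator (S v) z) = g2 v"
      by (auto simp: g2_def indicator_def)
    show "integrable lborel (g1 v)" using A1(1) by (simp add: g1_def)
    show "integrable lborel (g2 v)" using A2(1) h2 by simp
    have "retention_obj F \<theta> A v = ereal \<theta> * ereal (\<integral>z. g1 v z \<partial>lborel) - ereal (A / 2) * ereal (\<integral>z. g2 v z \<partial>lborel)"
      unfolding retention_obj_def r1 r2 A1(2) A2(2) h2 g1_def ..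
    then show "retention_obj F \<theta> A v = ereal (\<Phi> v)" by (simp add: \<Phi>_def)
  qed
  have key: "\<Phi> v < \<Phi> (ereal c)"
    if fin: "(\<integral>\<^sup>+z. ennreal (2 * z * G z) * indicator (S v) z \<partial>lborel) < \<infinity>"
      and pq: "p < q" "0 \<le> p" and inS: "\<And>z. p < z \<Longrightarrow> z < q \<Longrightarrow> (z \<in> S v) \<noteq> (z \<in> S (ereal c))"
      and v0: "0 \<le> v" and cpq: "c \<le> p \<or> q \<le> c" for v p q
  proof -
    define h where "h = (\<lambda>z. (\<theta> - A * z) * G z * (indicator (S (ereal c)) z - indicator (S v) z))"
    note iv = ints[OF fin] and ic = ints[OF I2fin[of c]]
    have hsplit: "h = (\<lambda>z. \<theta> * (g1 (ereal c) z - g1 v z) - A / 2 * (g2 (ereal c) z - g2 v z))"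
      by (auto simp: h_def g1_def g2_def algebra_simps)
    have hI: "integrable lborel h" unfolding hsplit using iv ic by auto
    have hint: "(\<integral>z. h z \<partial>lborel) = \<Phi> (ereal c) - \<Phi> v"
      unfolding hsplit \<Phi>_def using iv ic by (simp add: algebra_simps)
    have hnn: "0 \<le> h z" for z
    proof -
      have "0 \<le> (\<theta> - A * z) * (indicator (S (ereal c)) z - indicator (S v) z)"
        using le_c[of z] gt_c[of z] by (auto simp: S_def indicator_def)
      then show ?thesis using G01[of z] unfolding h_def
        by (metis mult.commute mult.left_commute mult_nonneg_nonneg)
    qed
    have hpos: "0 < h z" if "p < z" "z < q" for z
    proof -
      have zc: "z \<noteq> c" using cpq that by auto
      have z0: "0 \<le> z" using that \<open>0 \<le> p\<close> by simp
      have P: "0 < (\<theta> - A * z) * (indicator (S (ereal c)) z - indicator (S v) z)"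
      proof (cases "z \<in> S (ereal c)")
        case True
        then have "z \<notin> S v" using inS[OF that] by blast
        moreover have "z < c" using True zc by (simp add: S_ereal)
        ultimately show ?thesis using lt_c[of z] True by simp
      next
        case False
        then have "z \<in> S v" using inS[OF that] by blast
        moreover have "c < z" using False z0 by (simp add: S_ereal)
        ultimately show ?thesis using gt_c[of z] False by simp
      qed
      have "h z = ((\<theta> - A * z) * (indicator (S (ereal c)) z - indicator (S v) z)) * G z"
        unfolding h_def by (simp only: mult_ac)
      then show ?thesis using P Gpos[OF z0] by simp
    qed
    have "0 < (\<integral>z. h z \<partial>lborel)" by (rule pos_interval_integral[OF hI hnn pq(1) hpos])
    then show ?thesis using hint by simp
  qed
  have objc: "retention_obj F \<theta> A (ereal c) = ereal (\<Phi> (ereal c))" by (rule obj_eq[OF I2fin])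
  have final: "retention_obj F \<theta> A u < retention_obj F \<theta> A (ereal c)"
  proof (cases u)
    case (real r)
    have r0: "0 \<le> r" using u0 real by simp
    have rc: "r \<noteq> c" using uc real by (simp add: A_def c_def)
    have "\<Phi> u < \<Phi> (ereal c)"
    proof (cases "r < c")
      case True
      show ?thesis
        by (rule key[of u r c]) (use True r0 I2fin[of r] in \<open>simp_all add: real S_ereal\<close>)
    next
      case False
      then have "c < r" using rc by simp
      show ?thesis
        by (rule key[of u c r]) (use \<open>c < r\<close> c0 I2fin[of r] in \<open>simp_all add: real S_ereal\<close>)
    qed
    then show ?thesis using obj_eq[of u] I2fin[of r] real objc by simp
  next
    case PInf
    show ?thesis
    proof (cases "(\<integral>\<^sup>+z. ennreal (2 * z * G z) * indicator (S u) z \<partial>lborel) < \<infinity>")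
      case True
      have "\<Phi> u < \<Phi> (ereal c)"
      proof (rule key[of u c "c + 1"])
        show "(\<integral>\<^sup>+z. ennreal (2 * z * G z) * indicator (S u) z \<partial>lborel) < \<infinity>" by (rule True)
        show "c < c + 1" by simp
        show "0 \<le> c" using c0 by simp
        show "0 \<le> u" by (rule u0)
        show "c \<le> c \<or> c + 1 \<le> c" by simp
        fix z assume "c < z" "z < c + 1"
        then show "(z \<in> S u) \<noteq> (z \<in> S (ereal c))" using c0 unfolding PInf S_inf S_ereal by auto
      qed
      then show ?thesis unfolding obj_eq[OF True] objc by simp
    next
      case False
      then have inf2: "(\<integral>\<^sup>+z. ennreal (2 * z * G z) * indicator (S u) z \<partial>lborel) = \<infinity>"
        unfolding infinity_ennreal_def using less_top by blast
      define a where "a = enn2real (\<integral>\<^sup>+z. ennreal (G z) * indicator (S u) z \<partial>lborel)"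
      have a: "(\<integral>\<^sup>+z. ennreal (G z) * indicator (S u) z \<partial>lborel) = ennreal a" "0 \<le> a"
        unfolding a_def by (rule ennreal_enn2real[OF I1fin[of u, unfolded infinity_ennreal_def], symmetric]) (rule enn2real_nonneg)
      have "retention_obj F \<theta> A u = - \<infinity>"
      proof -
        have r1: "(\<integral>\<^sup>+z. ennreal (1 - F z) * indicator {z. 0 \<le> z \<and> ereal z \<le> u} z \<partial>lborel) = (\<integral>\<^sup>+z. ennreal (G z) * indicator (S u) z \<partial>lborel)"
          by (simp add: G_def S_def)
        have r2: "(\<integral>\<^sup>+z. ennreal (2 * z * (1 - F z)) * indicator {z. 0 \<le> z \<and> ereal z \<le> u} z \<partial>lborel) = (\<integral>\<^sup>+z. ennreal (2 * z * G z) * indicator (S u) z \<partial>lborel)"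
          by (simp add: G_def S_def)
        have "retention_obj F \<theta> A u = ereal \<theta> * ereal a - ereal (A / 2) * \<infinity>"
          unfolding retention_obj_def r1 r2 a(1) inf2 using a(2) by simp
        also have "\<dots> = - \<infinity>" using A0 by simp
        finally show ?thesis .
      qed
      then show ?thesis using objc by simp
    qed
  next
    case MInf
    then show ?thesis using u0 by simp
  qed
show "retention_obj (claim_cdf M Z) \<theta> (sahara_A \<alpha> b d x) u
             < retention_obj (claim_cdf M Z) \<theta> (sahara_A \<alpha> b d x) (ereal (\<theta> / sahara_A \<alpha> b d x))"
    using final by (simp only: F_def A_def c_def)
qed

end
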